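(* In the quasitriangular Hopf algebra $U_q(H_1,H_2,X^\pm)$ with universal $R$-matrix $\mathcal R=\sum_i a_i\otimes b_i$ as in the context, let $u=\sum_i S(b_i)a_i$, $z=u\,S(u)$ and $r=u\,(S(u))^{-1}$. Then, with $E=K_2X^+$, $F=K_2^{-1}X^-$, $$u=e^{i\frac{\pi}{4}H_2^2}q^{-\frac14(H_1^2-H_2^2)}\left(1+(1-q^2)K_1^{-1}K_2^{-1}FE\right),\qquad S(u)=e^{i\frac{\pi}{4}H_2^2}q^{-\frac14(H_1^2-H_2^2)}\left(1+(1-q^2)EFK_1K_2\right),$$ $$z=e^{i\frac{\pi}{2}H_2^2}q^{-\frac12(H_1^2-H_2^2)}\left(1+(1-q^2)(K_1K_2EF+K_1^{-1}K_2^{-1}FE)\right),\qquad r=e^{-i\pi H_2}q^{-(H_1+H_2)}.$$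
   Context: $q$ is a deformation parameter and exponentials of the generators are understood formally. Set $K_1=q^{H_1/2}$, $K_2=e^{i\frac{\pi}{2}H_2}q^{H_2/2}$. $U_q(H_1,H_2,X^\pm)$ is the Hopf algebra generated by $H_1,H_2,X^\pm$ with relations $[H_1,H_2]=0$, $[H_1,X^\pm]=\pm2X^\pm$, $[H_2,X^\pm]=\mp2X^\pm$, $[X^+,X^-]=\frac{K_1K_2-K_1^{-1}K_2^{-1}}{q-q^{-1}}$, $(X^\pm)^2=0$; coproduct $\Delta H_i=H_i\otimes1+1\otimes H_i$, $\Delta X^+=X^+\otimes K_1+K_2^{-1}\otimes X^+$, $\Delta X^-=X^-\otimes K_2+K_1^{-1}\otimes X^-$; counit $\varepsilon(H_i)=\varepsilon(X^\pm)=0$; antipode $S(H_i)=-H_i$, $S(X^+)=-qK_1^{-1}K_2X^+$, $S(X^-)=qK_1K_2^{-1}X^-$. Its universal $R$-matrix is $\mathcal{R}=e^{-i\frac{\pi}{4}H_2\otimes H_2}q^{\frac14(H_1\otimes H_1-H_2\otimes H_2)}(1\otimes1+(1-q^2)E\otimes F)$ with $E=K_2X^+$, $F=K_2^{-1}X^-$. *)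

theory Defs
  imports Complex_Main
begin

text \<open>Formal exponentials of H1, H2 such as
  q^(H/2) = exp(hb*H/2) are realised as functions of the weight (h1,h2).  Every element of the
  (completed) algebra is written uniquely in PBW normal form
    sum over (a,b) of  c_(a,b)(H1,H2) (X+)^a (X-)^b,    a,b in {0,1},
  with coefficient functions on the left; it is represented by the map (a,b) |-> c_(a,b).\<close>

type_synonym wt = "complex \<times> complex"
type_synonym uq = "bool \<times> bool \<Rightarrow> wt \<Rightarrow> complex"
type_synonym uqt = "bool \<times> bool \<Rightarrow> bool \<times> bool \<Rightarrow> wt \<Rightarrow> wt \<Rightarrow> complex"

definition qpar :: "complex \<Rightarrow> complex" where
  "qpar hb = exp hb"

definition K1f :: "complex \<Rightarrow> wt \<Rightarrow> complex" where
  "K1f hb h = exp (hb * fst h / 2)"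
definition K2f :: "complex \<Rightarrow> wt \<Rightarrow> complex" where
  "K2f hb h = exp (\<i> * pi * snd h / 2) * exp (hb * snd h / 2)"

text \<open>Value of [X+,X-] = (K1K2 - K1^-1 K2^-1)/(q - q^-1) at a weight.\<close>
definition Cf :: "complex \<Rightarrow> wt \<Rightarrow> complex" where
  "Cf hb h = (K1f hb h * K2f hb h - inverse (K1f hb h * K2f hb h)) / (qpar hb - inverse (qpar hb))"

text \<open>Commuting the monomial (X+)^a (X-)^b past a function g(H1,H2):
  (X+)^a (X-)^b g(H1,H2) = g(H1 - 2(a-b), H2 + 2(a-b)) (X+)^a (X-)^b
  (from [H1,X+-] = +-2X+-, [H2,X+-] = -+2X+-).\<close>
definition sh :: "bool \<times> bool \<Rightarrow> wt \<Rightarrow> wt" where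
  "sh \<alpha> h = (fst h - 2 * (of_bool (fst \<alpha>) - of_bool (snd \<alpha>)),
              snd h + 2 * (of_bool (fst \<alpha>) - of_bool (snd \<alpha>)))"

definition negw :: "wt \<Rightarrow> wt" where
  "negw h = (- fst h, - snd h)"

text \<open>Normal form of the product of monomials (X+)^a(X-)^b * (X+)^c(X-)^d, using
  (X+)^2 = (X-)^2 = 0 and X- X+ = X+ X- - [X+,X-]: coefficient of (X+)^g1 (X-)^g2 at weight h.\<close>
definition mm :: "complex \<Rightarrow> bool \<times> bool \<Rightarrow> bool \<times> bool \<Rightarrow> bool \<times> bool \<Rightarrow> wt \<Rightarrow> complex" where
  "mm hb \<alpha> \<beta> \<gamma> h =
     (let a = fst \<alpha>; b = snd \<alpha>; c = fst \<beta>; d = snd \<beta> in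
      if b \<and> c then
        (if \<not> a \<and> \<not> d \<and> \<gamma> = (True, True) then 1 else 0)
        - (if \<gamma> = (a, d) then Cf hb (sh (a, False) h) else 0)
      else if \<not> b then (if \<not> (a \<and> c) \<and> \<gamma> = (a \<or> c, d) then 1 else 0)
      else (if \<not> d \<and> \<gamma> = (a, True) then 1 else 0))"

definition Uq_mult :: "complex \<Rightarrow> uq \<Rightarrow> uq \<Rightarrow> uq" where
  "Uq_mult hb x y = (\<lambda>\<gamma> h. \<Sum>\<alpha>\<in>UNIV. \<Sum>\<beta>\<in>UNIV. x \<alpha> h * y \<beta> (sh \<alpha> h) * mm hb \<alpha> \<beta> \<gamma> h)"

definition Uq_add :: "uq \<Rightarrow> uq \<Rightarrow> uq" where
  "Uq_add x y = (\<lambda>\<gamma> h. x \<gamma> h + y \<gamma> h)"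

definition Uq_smult :: "complex \<Rightarrow> uq \<Rightarrow> uq" where
  "Uq_smult c x = (\<lambda>\<gamma> h. c * x \<gamma> h)"

definition Uq_sum :: "('i::finite \<Rightarrow> uq) \<Rightarrow> uq" where
  "Uq_sum f = (\<lambda>\<gamma> h. \<Sum>i\<in>UNIV. f i \<gamma> h)"

definition Uq_fun :: "(wt \<Rightarrow> complex) \<Rightarrow> uq" where
  "Uq_fun f = (\<lambda>\<gamma> h. if \<gamma> = (False, False) then f h else 0)"

definition Uq_mono :: "bool \<times> bool \<Rightarrow> uq" where
  "Uq_mono \<alpha> = (\<lambda>\<gamma> h. if \<gamma> = \<alpha> then 1 else 0)"

definition Uq_one :: uq where "Uq_one = Uq_mono (False, False)"
definition Uq_Xp :: uq where "Uq_Xp = Uq_mono (True, False)"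
definition Uq_Xm :: uq where "Uq_Xm = Uq_mono (False, True)"
definition Uq_H1 :: uq where "Uq_H1 = Uq_fun fst"
definition Uq_H2 :: uq where "Uq_H2 = Uq_fun snd"

definition Uq_K1 :: "complex \<Rightarrow> uq" where "Uq_K1 hb = Uq_fun (K1f hb)"
definition Uq_K2 :: "complex \<Rightarrow> uq" where "Uq_K2 hb = Uq_fun (K2f hb)"
definition Uq_K1inv :: "complex \<Rightarrow> uq" where "Uq_K1inv hb = Uq_fun (\<lambda>h. inverse (K1f hb h))"
definition Uq_K2inv :: "complex \<Rightarrow> uq" where "Uq_K2inv hb = Uq_fun (\<lambda>h. inverse (K2f hb h))"

definition Uq_E :: "complex \<Rightarrow> uq" where "Uq_E hb = Uq_mult hb (Uq_K2 hb) Uq_Xp"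
definition Uq_F :: "complex \<Rightarrow> uq" where "Uq_F hb = Uq_mult hb (Uq_K2inv hb) Uq_Xm"

definition Uq_inv :: "complex \<Rightarrow> uq \<Rightarrow> uq" where
  "Uq_inv hb x = (THE y. Uq_mult hb x y = Uq_one \<and> Uq_mult hb y x = Uq_one)"

text \<open>S(X+) = -q K1^-1 K2 X+,  S(X-) = q K1 K2^-1 X-,  S(H_i) = -H_i; S is an
  anti-homomorphism, so S(f(H) (X+)^a (X-)^b) = S(X-)^b S(X+)^a f(-H).\<close>
definition Uq_SXp :: "complex \<Rightarrow> uq" where
  "Uq_SXp hb = Uq_smult (- qpar hb) (Uq_mult hb (Uq_mult hb (Uq_K1inv hb) (Uq_K2 hb)) Uq_Xp)"
definition Uq_SXm :: "complex \<Rightarrow> uq" where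
  "Uq_SXm hb = Uq_smult (qpar hb) (Uq_mult hb (Uq_mult hb (Uq_K1 hb) (Uq_K2inv hb)) Uq_Xm)"

definition Uq_Smono :: "complex \<Rightarrow> bool \<times> bool \<Rightarrow> uq" where
  "Uq_Smono hb \<alpha> = Uq_mult hb (if snd \<alpha> then Uq_SXm hb else Uq_one)
                                (if fst \<alpha> then Uq_SXp hb else Uq_one)"

definition Uq_S :: "complex \<Rightarrow> uq \<Rightarrow> uq" where
  "Uq_S hb x = Uq_sum (\<lambda>\<alpha>. Uq_mult hb (Uq_Smono hb \<alpha>) (Uq_fun (\<lambda>h. x \<alpha> (negw h))))"

text \<open>An element sum F_(alpha,beta)(H (x) 1, 1 (x) H) (m_alpha (x) m_beta), coefficient functions of
  the weights of both factors on the left.\<close>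

definition Uqt_mult :: "complex \<Rightarrow> uqt \<Rightarrow> uqt \<Rightarrow> uqt" where
  "Uqt_mult hb X Y = (\<lambda>\<gamma> \<delta> h k. \<Sum>\<alpha>\<in>UNIV. \<Sum>\<beta>\<in>UNIV. \<Sum>\<alpha>'\<in>UNIV. \<Sum>\<beta>'\<in>UNIV.
      X \<alpha> \<beta> h k * Y \<alpha>' \<beta>' (sh \<alpha> h) (sh \<beta> k) * mm hb \<alpha> \<alpha>' \<gamma> h * mm hb \<beta> \<beta>' \<delta> k)"

definition Uqt_add :: "uqt \<Rightarrow> uqt \<Rightarrow> uqt" where
  "Uqt_add X Y = (\<lambda>\<alpha> \<beta> h k. X \<alpha> \<beta> h k + Y \<alpha> \<beta> h k)"

definition Uqt_smult :: "complex \<Rightarrow> uqt \<Rightarrow> uqt" where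
  "Uqt_smult c X = (\<lambda>\<alpha> \<beta> h k. c * X \<alpha> \<beta> h k)"

definition Uq_tensor :: "uq \<Rightarrow> uq \<Rightarrow> uqt" where
  "Uq_tensor x y = (\<lambda>\<alpha> \<beta> h k. x \<alpha> h * y \<beta> k)"

definition Uqt_one :: uqt where "Uqt_one = Uq_tensor Uq_one Uq_one"

definition Uqt_fun :: "(wt \<Rightarrow> wt \<Rightarrow> complex) \<Rightarrow> uqt" where
  "Uqt_fun \<Phi> = (\<lambda>\<alpha> \<beta> h k. if \<alpha> = (False, False) \<and> \<beta> = (False, False) then \<Phi> h k else 0)"

definition Uq_R :: "complex \<Rightarrow> uqt" where
  "Uq_R hb = Uqt_mult hb
      (Uqt_fun (\<lambda>h k. exp (- \<i> * pi / 4 * (snd h * snd k))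
                      * exp (hb / 4 * (fst h * fst k - snd h * snd k))))
      (Uqt_add Uqt_one (Uqt_smult (1 - (qpar hb)^2) (Uq_tensor (Uq_E hb) (Uq_F hb))))"

text \<open>For R = sum_i a_i (x) b_i, the element sum_i S(b_i) a_i.  On a term
  F(H(x)1, 1(x)H) (m_alpha (x) m_beta) = sum_i f_i(H) m_alpha (x) g_i(H) m_beta it equals
  sum_i S(m_beta) g_i(-H) f_i(H) m_alpha = S(m_beta) F(H,-H) m_alpha; extended linearly.\<close>
definition Uq_Sb_a :: "complex \<Rightarrow> uqt \<Rightarrow> uq" where
  "Uq_Sb_a hb T = Uq_sum (\<lambda>(\<alpha>, \<beta>). Uq_mult hb (Uq_S hb (Uq_mono \<beta>))
                       (Uq_mult hb (Uq_fun (\<lambda>h. T \<alpha> \<beta> h (negw h))) (Uq_mono \<alpha>)))"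

definition Uq_u :: "complex \<Rightarrow> uq" where
  "Uq_u hb = Uq_Sb_a hb (Uq_R hb)"

end

theory Submission
  imports Defs
begin



lemma UNIV_bb: "(UNIV::(bool\<times>bool) set) = {(False,False),(False,True),(True,False),(True,True)}"
  by (auto simp: UNIV_Times_UNIV[symmetric] UNIV_bool)

lemma sh_simps[simp]:
  "sh (False,False) h = h" "sh (True,True) h = h"
  "sh (True,False) h = (fst h - 2, snd h + 2)"
  "sh (False,True) h = (fst h + 2, snd h - 2)"
  by (auto simp: sh_def)

lemma mult_eq: "Uq_mult hb x y = (\<lambda>\<gamma> h.
   if \<gamma> = (False,False) then x (False,False) h * y (False,False) h
        - Cf hb h * x (False,True) h * y (True,False) (fst h + 2, snd h - 2)
   else if \<gamma> = (True,False) then x (False,False) h * y (True,False) h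
        + x (True,False) h * y (False,False) (fst h - 2, snd h + 2)
        - Cf hb (fst h - 2, snd h + 2) * x (True,True) h * y (True,False) h
   else if \<gamma> = (False,True) then x (False,False) h * y (False,True) h
        + x (False,True) h * y (False,False) (fst h + 2, snd h - 2)
        - Cf hb h * x (False,True) h * y (True,True) (fst h + 2, snd h - 2)
   else x (False,False) h * y (True,True) h
        + x (True,False) h * y (False,True) (fst h - 2, snd h + 2)
        + x (False,True) h * y (True,False) (fst h + 2, snd h - 2)
        + x (True,True) h * y (False,False) h
        - Cf hb (fst h - 2, snd h + 2) * x (True,True) h * y (True,True) h)"
  apply (rule ext)+
  subgoal for \<gamma> h
    apply (cases \<gamma>; cases "fst \<gamma>"; cases "snd \<gamma>")
    apply (simp_all add: Uq_mult_def UNIV_bb mm_def Let_def algebra_simps)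
    done
  done



definition Pf :: "complex \<Rightarrow> wt \<Rightarrow> complex" where
  "Pf hb h = exp (\<i> * pi / 4 * (snd h)^2) * exp (- hb / 4 * ((fst h)^2 - (snd h)^2))"


lemma Pf_shift01: "Pf hb (a + 2, b - 2) = - Pf hb (a,b) / (K1f hb (a,b) * K2f hb (a,b))^2"
proof -
  have "Pf hb (a + 2, b - 2) * (K1f hb (a,b) * K2f hb (a,b))^2 = exp (\<i> * pi) * Pf hb (a,b)"
    unfolding Pf_def K1f_def K2f_def power2_eq_square
    by (simp only: exp_add[symmetric] mult.assoc[symmetric]) (rule arg_cong[where f=exp], simp add: field_simps power2_eq_square)
  then show ?thesis by (simp add: field_simps K1f_def K2f_def)
qed

lemma Pf_shift10: "Pf hb (a - 2, b + 2) = - Pf hb (a,b) * (K1f hb (a,b) * K2f hb (a,b))^2"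
proof -
  have "Pf hb (a - 2, b + 2) = exp (\<i> * pi) * Pf hb (a,b) * (K1f hb (a,b) * K2f hb (a,b))^2"
    unfolding Pf_def K1f_def K2f_def power2_eq_square
    by (simp only: exp_add[symmetric] mult.assoc[symmetric]) (rule arg_cong[where f=exp], simp add: field_simps power2_eq_square)
  then show ?thesis by simp
qed

lemma K1_m2: "K1f hb (a - 2, b) = K1f hb (a, b) / qpar hb"
  unfolding K1f_def qpar_def by (simp add: exp_diff[symmetric] field_simps)
lemma K1_p2: "K1f hb (a + 2, b) = K1f hb (a, b) * qpar hb"
  unfolding K1f_def qpar_def by (simp add: exp_add[symmetric] field_simps)
lemma K2_p2: "K2f hb (a, b + 2) = - (K2f hb (a, b) * qpar hb)"
proof -
  have "K2f hb (a, b + 2) = exp (\<i> * pi) * (K2f hb (a, b) * qpar hb)"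
    unfolding K2f_def qpar_def
    by (simp only: exp_add[symmetric] mult.assoc[symmetric]) (rule arg_cong[where f=exp], simp add: field_simps power2_eq_square)
  then show ?thesis by simp
qed
lemma K2_m2: "K2f hb (a, b - 2) = - (K2f hb (a, b) / qpar hb)"
proof -
  have "K2f hb (a, b - 2) * qpar hb = exp (- \<i> * pi) * K2f hb (a, b)"
    unfolding K2f_def qpar_def
    by (simp only: exp_add[symmetric] mult.assoc[symmetric]) (rule arg_cong[where f=exp], simp add: field_simps power2_eq_square)
  moreover have "exp (- \<i> * pi) = -1" by (simp add: exp_minus)
  moreover have "qpar hb \<noteq> 0" by (simp add: qpar_def)
  ultimately show ?thesis by (simp add: field_simps)
qed
lemma K1_neg: "K1f hb (- a, - b) = inverse (K1f hb (a, b))"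
  unfolding K1f_def by (simp add: exp_minus[symmetric])
lemma K2_neg: "K2f hb (- a, - b) = inverse (K2f hb (a, b))"
  unfolding K2f_def by (simp add: exp_minus[symmetric] mult_exp_exp)
lemma Pf_neg: "Pf hb (- a, - b) = Pf hb (a, b)"
  unfolding Pf_def by simp
lemma nz[simp]: "K1f hb h \<noteq> 0" "K2f hb h \<noteq> 0" "Pf hb h \<noteq> 0" "qpar hb \<noteq> 0"
  by (auto simp: K1f_def K2f_def Pf_def qpar_def)

lemma z_lam: "(\<lambda>h. exp (\<i> * pi / 2 * (snd h)^2) * exp (- hb / 2 * ((fst h)^2 - (snd h)^2))) = (\<lambda>h. Pf hb h ^ 2)"
  unfolding Pf_def power2_eq_square[of "exp _ * exp _"]
  by (rule ext) (simp only: exp_add[symmetric] mult.assoc[symmetric], rule arg_cong[where f=exp], simp add: field_simps power2_eq_square)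
lemma r_lam: "(\<lambda>h. exp (- \<i> * pi * snd h) * exp (- hb * (fst h + snd h))) = (\<lambda>h. inverse ((K1f hb h * K2f hb h)^2))"
  unfolding K1f_def K2f_def power2_eq_square
  by (rule ext) (simp only: exp_add[symmetric] mult.assoc[symmetric] exp_minus[symmetric], rule arg_cong[where f=exp], simp add: field_simps power2_eq_square)



lemma sum_bb: "(\<Sum>a\<in>(UNIV::(bool\<times>bool) set). f a) = f (False,False) + f (False,True) + f (True,False) + f (True,True)"
  by (simp add: UNIV_bb add.assoc)

lemma Uq_sum_pp: "Uq_sum (f :: (bool\<times>bool)\<times>(bool\<times>bool) \<Rightarrow> uq) = (\<lambda>\<gamma> h. \<Sum>a\<in>UNIV. \<Sum>b\<in>UNIV. f (a,b) \<gamma> h)"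
  unfolding Uq_sum_def UNIV_Times_UNIV[symmetric] by (simp add: sum.cartesian_product)

lemma tmult_fun: "Uqt_mult hb (Uqt_fun \<Phi>) Y = (\<lambda>\<gamma> \<delta> h k. \<Phi> h k * Y \<gamma> \<delta> h k)"
  apply (rule ext)+
  subgoal for \<gamma> \<delta> h k
  apply (simp add: Uqt_mult_def Uqt_fun_def sum_bb mm_def Let_def)
    apply (cases \<gamma>; cases \<delta>; simp)
    done
  done

definition Phi :: "complex \<Rightarrow> wt \<Rightarrow> wt \<Rightarrow> complex" where
  "Phi hb h k = exp (- \<i> * pi / 4 * (snd h * snd k)) * exp (hb / 4 * (fst h * fst k - snd h * snd k))"

lemma Phi_neg: "Phi hb h (negw h) = Pf hb h"
  unfolding Phi_def Pf_def negw_def by (simp add: power2_eq_square algebra_simps)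

lemma E_eq: "Uq_E hb = (\<lambda>\<gamma> h. if \<gamma> = (True,False) then K2f hb h else 0)"
  by (rule ext)+ (auto simp: Uq_E_def mult_eq Uq_K2_def Uq_fun_def Uq_Xp_def Uq_mono_def)
lemma F_eq: "Uq_F hb = (\<lambda>\<gamma> h. if \<gamma> = (False,True) then inverse (K2f hb h) else 0)"
  by (rule ext)+ (auto simp: Uq_F_def mult_eq Uq_K2inv_def Uq_fun_def Uq_Xm_def Uq_mono_def)

lemma R_eq: "Uq_R hb = (\<lambda>\<gamma> \<delta> h k. Phi hb h k
   * ((if \<gamma> = (False,False) \<and> \<delta> = (False,False) then 1 else 0) + (1 - qpar hb ^ 2) * Uq_E hb \<gamma> h * Uq_F hb \<delta> k))"
  unfolding Uq_R_def Phi_def[abs_def] tmult_fun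
  by (rule ext)+ (simp add: Uqt_add_def Uqt_one_def Uq_tensor_def Uqt_smult_def Uq_one_def Uq_mono_def)

lemma S_mono: "Uq_S hb (Uq_mono \<beta>) = Uq_Smono hb \<beta>"
  apply (rule ext)+
  apply (simp add: Uq_S_def Uq_sum_def sum_bb mult_eq Uq_mono_def Uq_fun_def)
  apply (cases \<beta>; simp)
  apply auto
  done

lemma K1_s10: "K1f hb (fst h - 2, x) = K1f hb h / qpar hb"
  using K1_m2[of hb "fst h" "snd h"] by (simp add: K1f_def)
lemma K1_s01: "K1f hb (fst h + 2, x) = K1f hb h * qpar hb"
  using K1_p2[of hb "fst h" "snd h"] by (simp add: K1f_def)
lemma K2_s10: "K2f hb (x, snd h + 2) = - (K2f hb h * qpar hb)"
  using K2_p2[of hb "fst h" "snd h"] by (simp add: K2f_def)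
lemma K2_s01: "K2f hb (x, snd h - 2) = - (K2f hb h / qpar hb)"
  using K2_m2[of hb "fst h" "snd h"] by (simp add: K2f_def)
lemma Pf_s01: "Pf hb (fst h + 2, snd h - 2) = - Pf hb h / (K1f hb h * K2f hb h)^2"
  using Pf_shift01[of hb "fst h" "snd h"] by simp
lemma Pf_s10: "Pf hb (fst h - 2, snd h + 2) = - Pf hb h * (K1f hb h * K2f hb h)^2"
  using Pf_shift10[of hb "fst h" "snd h"] by simp
lemma negs: "K1f hb (negw h) = inverse (K1f hb h)" "K2f hb (negw h) = inverse (K2f hb h)" "Pf hb (negw h) = Pf hb h"
  using K1_neg[of hb "fst h" "snd h"] K2_neg[of hb "fst h" "snd h"] Pf_neg[of hb "fst h" "snd h"] by (simp_all add: negw_def)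

lemmas atoms = K1_s10 K1_s01 K2_s10 K2_s01 Pf_s01 Pf_s10 negs Phi_neg


definition dg :: "(wt \<Rightarrow> complex) \<Rightarrow> (wt \<Rightarrow> complex) \<Rightarrow> uq" where
  "dg f0 f1 = (\<lambda>\<gamma> h. if \<gamma> = (False,False) then f0 h else if \<gamma> = (True,True) then f1 h else 0)"

lemma bb_ex: "(\<gamma>::bool\<times>bool) = (False,False) \<or> \<gamma> = (False,True) \<or> \<gamma> = (True,False) \<or> \<gamma> = (True,True)"
  by (cases \<gamma>) auto

lemma fun_mult: "Uq_mult hb (Uq_fun f) x = (\<lambda>\<gamma> h. f h * x \<gamma> h)"
  apply (rule ext)+ subgoal for \<gamma> h using bb_ex[of \<gamma>] by (auto simp: mult_eq Uq_fun_def) done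
lemma fun_fun: "Uq_mult hb (Uq_fun f) (Uq_fun g) = Uq_fun (\<lambda>h. f h * g h)"
  unfolding fun_mult by (rule ext)+ (simp add: Uq_fun_def)
lemma mult_fun: "Uq_mult hb x (Uq_fun f) = (\<lambda>\<gamma> h. x \<gamma> h * f (sh \<gamma> h))"
  apply (rule ext)+ subgoal for \<gamma> h using bb_ex[of \<gamma>] by (auto simp: mult_eq Uq_fun_def) done
lemma one_mult: "Uq_mult hb Uq_one x = x"
  apply (rule ext)+ subgoal for \<gamma> h using bb_ex[of \<gamma>] by (auto simp: mult_eq Uq_one_def Uq_mono_def) done
lemma mult_zero: "Uq_mult hb x (\<lambda>\<gamma> h. 0) = (\<lambda>\<gamma> h. 0)"
  by (rule ext)+ (simp add: mult_eq)

lemma SXm_eq: "Uq_SXm hb = (\<lambda>\<gamma> h. if \<gamma> = (False,True) then qpar hb * K1f hb h / K2f hb h else 0)"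
  unfolding Uq_SXm_def Uq_K1_def Uq_K2inv_def fun_fun unfolding fun_mult by (rule ext)+ (auto simp:  Uq_K1_def Uq_K2inv_def Uq_fun_def Uq_Xm_def Uq_mono_def Uq_smult_def field_simps)
lemma SXp_eq: "Uq_SXp hb = (\<lambda>\<gamma> h. if \<gamma> = (True,False) then - qpar hb * K2f hb h / K1f hb h else 0)"
  unfolding Uq_SXp_def Uq_K1inv_def Uq_K2_def fun_fun unfolding fun_mult by (rule ext)+ (auto simp:  Uq_K1inv_def Uq_K2_def Uq_fun_def Uq_Xp_def Uq_mono_def Uq_smult_def field_simps)

lemma R_neg: "Uq_R hb \<alpha> \<beta> h (negw h) = (if \<alpha> = (False,False) \<and> \<beta> = (False,False) then Pf hb h
   else if \<alpha> = (True,False) \<and> \<beta> = (False,True) then Pf hb h * (1 - qpar hb ^ 2) * K2f hb h ^ 2 else 0)"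
  by (auto simp: R_eq E_eq F_eq Phi_neg negs power2_eq_square)

lemma fun_mono: "Uq_mult hb (Uq_fun g) (Uq_mono \<alpha>) = (\<lambda>\<gamma> h. if \<gamma> = \<alpha> then g h else 0)"
  unfolding fun_mult by (rule ext)+ (simp add: Uq_mono_def)

lemma u_comp: "Uq_u hb = dg (\<lambda>h. Pf hb h - Cf hb h * (qpar hb * K1f hb h / K2f hb h * (Pf hb (fst h + 2, snd h - 2) * (1 - qpar hb ^ 2) * K2f hb (fst h + 2, snd h - 2) ^ 2)))
     (\<lambda>h. qpar hb * K1f hb h / K2f hb h * (Pf hb (fst h + 2, snd h - 2) * (1 - qpar hb ^ 2) * K2f hb (fst h + 2, snd h - 2) ^ 2))"
  unfolding Uq_u_def Uq_Sb_a_def Uq_sum_pp sum_bb R_neg fun_mono S_mono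
  apply (simp add: Uq_Smono_def one_mult)
  apply (rule ext)+
  subgoal for \<gamma> h using bb_ex[of \<gamma>] by (auto simp: mult_eq SXm_eq SXp_eq dg_def Uq_one_def Uq_mono_def)
  done




lemma Cf_s10: "Cf hb (fst h - 2, snd h + 2) = - Cf hb h"
proof -
  have "K1f hb (fst h - 2, snd h + 2) * K2f hb (fst h - 2, snd h + 2) = - (K1f hb h * K2f hb h)"
    unfolding K1_s10 K2_s10 by (simp add: field_simps)
  then show ?thesis unfolding Cf_def by (simp add: minus_divide_left)
qed
lemma Cf_neg: "Cf hb (negw h) = - Cf hb h"
proof -
  have "K1f hb (negw h) * K2f hb (negw h) = inverse (K1f hb h * K2f hb h)"
    unfolding negs by (simp add: field_simps)
  then show ?thesis unfolding Cf_def by (simp add: minus_divide_left)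
qed

lemma dg_mult: "Uq_mult hb (dg a0 a1) (dg b0 b1) = dg (\<lambda>h. a0 h * b0 h) (\<lambda>h. a0 h * b1 h + a1 h * b0 h + Cf hb h * a1 h * b1 h)"
  apply (rule ext)+ subgoal for \<gamma> h using bb_ex[of \<gamma>] by (auto simp: mult_eq dg_def Cf_s10) done
lemma dg_add: "Uq_add (dg a0 a1) (dg b0 b1) = dg (\<lambda>h. a0 h + b0 h) (\<lambda>h. a1 h + b1 h)"
  by (rule ext)+ (simp add: Uq_add_def dg_def)
lemma dg_smult: "Uq_smult c (dg a0 a1) = dg (\<lambda>h. c * a0 h) (\<lambda>h. c * a1 h)"
  by (rule ext)+ (simp add: Uq_smult_def dg_def)
lemma fun_dg: "Uq_fun f = dg f (\<lambda>h. 0)"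
  by (rule ext)+ (simp add: Uq_fun_def dg_def)
lemma one_dg: "Uq_one = dg (\<lambda>h. 1) (\<lambda>h. 0)"
  by (rule ext)+ (simp add: Uq_one_def Uq_mono_def dg_def)
lemma dg_eq: "dg a0 a1 = dg b0 b1 \<longleftrightarrow> a0 = b0 \<and> a1 = b1"
proof
  assume "dg a0 a1 = dg b0 b1"
  from fun_cong[OF this, of "(False,False)"] fun_cong[OF this, of "(True,True)"]
  show "a0 = b0 \<and> a1 = b1" by (simp add: dg_def fun_eq_iff)
qed simp

lemma A1: "Uq_mult hb (Uq_mult hb (Uq_mult hb (Uq_K1inv hb) (Uq_K2inv hb)) (Uq_F hb)) (Uq_E hb)
   = dg (\<lambda>h. Cf hb h / (qpar hb * K1f hb h * K2f hb h)) (\<lambda>h. - 1 / (qpar hb * K1f hb h * K2f hb h))"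
  unfolding Uq_K1inv_def Uq_K2inv_def fun_fun unfolding fun_mult F_eq E_eq
  apply (rule ext)+ subgoal for \<gamma> h using bb_ex[of \<gamma>] by (auto simp: mult_eq dg_def atoms field_simps) done

lemma A2: "Uq_mult hb (Uq_mult hb (Uq_mult hb (Uq_E hb) (Uq_F hb)) (Uq_K1 hb)) (Uq_K2 hb)
   = dg (\<lambda>h. 0) (\<lambda>h. - K1f hb h * K2f hb h / qpar hb)"
  unfolding Uq_K1_def Uq_K2_def mult_fun F_eq E_eq
  apply (rule ext)+ subgoal for \<gamma> h using bb_ex[of \<gamma>] by (auto simp: mult_eq dg_def atoms field_simps) done

lemma A3: "Uq_mult hb (Uq_mult hb (Uq_mult hb (Uq_K1 hb) (Uq_K2 hb)) (Uq_E hb)) (Uq_F hb)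
   = dg (\<lambda>h. 0) (\<lambda>h. - K1f hb h * K2f hb h / qpar hb)"
  unfolding Uq_K1_def Uq_K2_def fun_fun unfolding fun_mult F_eq E_eq
  apply (rule ext)+ subgoal for \<gamma> h using bb_ex[of \<gamma>] by (auto simp: mult_eq dg_def atoms field_simps) done

lemma SXmp: "Uq_mult hb (Uq_SXm hb) (Uq_SXp hb) = dg (\<lambda>h. - Cf hb h) (\<lambda>h. 1)"
  unfolding SXm_eq SXp_eq
  apply (rule ext)+ subgoal for \<gamma> h using bb_ex[of \<gamma>] by (auto simp: mult_eq dg_def atoms field_simps) done




lemma dg_at[simp]: "dg a0 a1 (False,False) h = a0 h" "dg a0 a1 (True,True) h = a1 h"
  "dg a0 a1 (False,True) h = 0" "dg a0 a1 (True,False) h = 0"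
  by (simp_all add: dg_def)
lemma Uq_sum_add: "Uq_sum (f :: bool\<times>bool \<Rightarrow> uq) = Uq_add (Uq_add (Uq_add (f (False,False)) (f (False,True))) (f (True,False))) (f (True,True))"
  by (simp add: Uq_sum_def Uq_add_def sum_bb)
lemma mult_one: "Uq_mult hb x Uq_one = x"
  apply (rule ext)+ subgoal for \<gamma> h using bb_ex[of \<gamma>] by (auto simp: mult_eq Uq_one_def Uq_mono_def) done
lemma dg_fun: "Uq_mult hb (dg b0 b1) (Uq_fun f) = dg (\<lambda>h. b0 h * f h) (\<lambda>h. b1 h * f h)"
  unfolding fun_dg dg_mult by simp
lemma fun0: "Uq_fun (\<lambda>h. 0) = (\<lambda>\<gamma> h. 0)" by (rule ext)+ (simp add: Uq_fun_def)
lemma add0: "Uq_add x (\<lambda>\<gamma> h. 0) = x" by (simp add: Uq_add_def)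

lemma S_dg: "Uq_S hb (dg a0 a1) = dg (\<lambda>h. a0 (negw h) - Cf hb h * a1 (negw h)) (\<lambda>h. a1 (negw h))"
  unfolding Uq_S_def Uq_sum_add Uq_Smono_def
  apply (simp only: dg_at fst_conv snd_conv if_True if_False fun0 mult_zero one_mult mult_one add0 SXmp dg_fun)
  apply (simp only: fun_dg dg_add)
  apply (simp add: one_dg dg_add)
  done


lemma divD: fixes D x a :: complex assumes "D \<noteq> 0" shows "D * (x / (a * D)) = x / a"
  using assms by (simp add: field_simps)
lemma solveD: fixes D y x :: complex assumes "D \<noteq> 0" "D * y = x" shows "y = x / D"
  using assms by (simp add: field_simps)
lemma alg: fixes a b c :: complex assumes "a \<noteq> 0" "a + c*b \<noteq> 0"
  shows "a * (-b/(a*(a+c*b))) + b*(1/a) + c*b*(-b/(a*(a+c*b))) = 0"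
proof -
  have 1: "a * (-b/(a*(a+c*b))) + c*b*(-b/(a*(a+c*b))) = - b / a"
    unfolding distrib_right[symmetric] by (rule divD[OF assms(2)])
  have "a * (-b/(a*(a+c*b))) + b*(1/a) + c*b*(-b/(a*(a+c*b))) = (a * (-b/(a*(a+c*b))) + c*b*(-b/(a*(a+c*b)))) + b*(1/a)"
    by (simp only: add_ac)
  also have "\<dots> = 0" unfolding 1 by simp
  finally show ?thesis .
qed
lemma alg2: fixes a b c :: complex assumes "a \<noteq> 0" "a + c*b \<noteq> 0"
  shows "1 / a * b + - b / (a * (a + c * b)) * a + c * (- b / (a * (a + c * b))) * b = 0"
  using alg[OF assms] by (simp add: algebra_simps)

lemma inv_dg:
  assumes n0: "\<And>h. a0 h \<noteq> 0" and n1: "\<And>h. a0 h + Cf hb h * a1 h \<noteq> 0"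
  shows "Uq_inv hb (dg a0 a1) = dg (\<lambda>h. 1 / a0 h) (\<lambda>h. - a1 h / (a0 h * (a0 h + Cf hb h * a1 h)))"
  unfolding Uq_inv_def
proof (rule the_equality)
  have e: "a0 h * (- a1 h / (a0 h * (a0 h + Cf hb h * a1 h))) + a1 h * (1 / a0 h) +
        Cf hb h * a1 h * (- a1 h / (a0 h * (a0 h + Cf hb h * a1 h))) = 0" for h
    by (rule alg[OF n0 n1])
  have e2: "1 / a0 h * a1 h + - a1 h / (a0 h * (a0 h + Cf hb h * a1 h)) * a0 h +
        Cf hb h * (- a1 h / (a0 h * (a0 h + Cf hb h * a1 h))) * a1 h = 0" for h
    by (rule alg2[OF n0 n1])
  show "Uq_mult hb (dg a0 a1) (dg (\<lambda>h. 1 / a0 h) (\<lambda>h. - a1 h / (a0 h * (a0 h + Cf hb h * a1 h)))) = Uq_one \<and>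
    Uq_mult hb (dg (\<lambda>h. 1 / a0 h) (\<lambda>h. - a1 h / (a0 h * (a0 h + Cf hb h * a1 h)))) (dg a0 a1) = Uq_one"
    unfolding dg_mult one_dg dg_eq using n0 e e2 by (simp add: fun_eq_iff)
next
  fix y assume "Uq_mult hb (dg a0 a1) y = Uq_one \<and> Uq_mult hb y (dg a0 a1) = Uq_one"
  then have m: "Uq_mult hb (dg a0 a1) y \<gamma> h = Uq_one \<gamma> h" for \<gamma> h by simp
  show "y = dg (\<lambda>h. 1 / a0 h) (\<lambda>h. - a1 h / (a0 h * (a0 h + Cf hb h * a1 h)))"
  proof (rule ext)+
    fix \<gamma> h
    have y00: "y (False,False) h = 1 / a0 h"
      using m[of "(False,False)" h] n0[of h] by (simp add: mult_eq Uq_one_def Uq_mono_def field_simps)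
    have "(a0 h + Cf hb h * a1 h) * y (True,False) h = 0"
      using m[of "(True,False)" h] by (simp add: mult_eq Uq_one_def Uq_mono_def Cf_s10 algebra_simps)
    then have y10: "y (True,False) h = 0" using n1[of h] by simp
    have y01: "y (False,True) h = 0"
      using m[of "(False,True)" h] n0[of h] by (simp add: mult_eq Uq_one_def Uq_mono_def)
    have "a0 h * y (True,True) h + a1 h * y (False,False) h + Cf hb h * a1 h * y (True,True) h = 0"
      using m[of "(True,True)" h] by (simp add: mult_eq Uq_one_def Uq_mono_def Cf_s10)
    then have "(a0 h + Cf hb h * a1 h) * y (True,True) h + a1 h / a0 h = 0"
      using y00 by (simp add: algebra_simps)
    then have "(a0 h + Cf hb h * a1 h) * y (True,True) h = - a1 h / a0 h"
      by (simp add: eq_neg_iff_add_eq_0)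
    then have "y (True,True) h = (- a1 h / a0 h) / (a0 h + Cf hb h * a1 h)"
      by (rule solveD[OF n1])
    then have y11: "y (True,True) h = - a1 h / (a0 h * (a0 h + Cf hb h * a1 h))"
      by (simp only: divide_divide_eq_left)
    show "y \<gamma> h = dg (\<lambda>h. 1 / a0 h) (\<lambda>h. - a1 h / (a0 h * (a0 h + Cf hb h * a1 h))) \<gamma> h"
      using bb_ex[of \<gamma>] y00 y10 y01 y11 by auto
  qed
qed



lemma Pf_lam: "(\<lambda>h. exp (\<i> * pi / 4 * (snd h)^2) * exp (- hb / 4 * ((fst h)^2 - (snd h)^2))) = Pf hb"
  by (rule ext) (simp add: Pf_def)

lemma u_dg: "Uq_u hb = dg (\<lambda>h. Pf hb h * (1 + (1 - qpar hb ^ 2) * (Cf hb h / (qpar hb * K1f hb h * K2f hb h))))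
                         (\<lambda>h. Pf hb h * ((1 - qpar hb ^ 2) * (- 1 / (qpar hb * K1f hb h * K2f hb h))))"
  unfolding u_comp dg_eq by (simp add: fun_eq_iff atoms field_simps) (simp add: algebra_simps power2_eq_square eval_nat_numeral)

lemma u_rhs: "Uq_mult hb (Uq_fun (Pf hb))
             (Uq_add Uq_one (Uq_smult (1 - (qpar hb)^2)
                (Uq_mult hb (Uq_mult hb (Uq_mult hb (Uq_K1inv hb) (Uq_K2inv hb)) (Uq_F hb)) (Uq_E hb))))
  = dg (\<lambda>h. Pf hb h * (1 + (1 - qpar hb ^ 2) * (Cf hb h / (qpar hb * K1f hb h * K2f hb h))))
                         (\<lambda>h. Pf hb h * ((1 - qpar hb ^ 2) * (- 1 / (qpar hb * K1f hb h * K2f hb h))))"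
  unfolding A1 fun_dg one_dg dg_smult dg_add dg_mult dg_eq by (simp add: fun_eq_iff)

lemma Su_dg: "Uq_S hb (Uq_u hb) = dg (Pf hb) (\<lambda>h. Pf hb h * ((1 - qpar hb ^ 2) * (- K1f hb h * K2f hb h / qpar hb)))"
  unfolding u_dg S_dg dg_eq by (simp add: fun_eq_iff negs Cf_neg field_simps)

lemma Su_rhs: "Uq_mult hb (Uq_fun (Pf hb))
             (Uq_add Uq_one (Uq_smult (1 - (qpar hb)^2)
                (Uq_mult hb (Uq_mult hb (Uq_mult hb (Uq_E hb) (Uq_F hb)) (Uq_K1 hb)) (Uq_K2 hb))))
  = dg (Pf hb) (\<lambda>h. Pf hb h * ((1 - qpar hb ^ 2) * (- K1f hb h * K2f hb h / qpar hb)))"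
  unfolding A2 fun_dg one_dg dg_smult dg_add dg_mult dg_eq by (simp add: fun_eq_iff)

lemma z_ok: "Uq_mult hb (Uq_u hb) (Uq_S hb (Uq_u hb)) = Uq_mult hb
             (Uq_fun (\<lambda>h. Pf hb h ^ 2))
             (Uq_add Uq_one (Uq_smult (1 - (qpar hb)^2)
                (Uq_add (Uq_mult hb (Uq_mult hb (Uq_mult hb (Uq_K1 hb) (Uq_K2 hb)) (Uq_E hb)) (Uq_F hb))
                        (Uq_mult hb (Uq_mult hb (Uq_mult hb (Uq_K1inv hb) (Uq_K2inv hb)) (Uq_F hb)) (Uq_E hb)))))"
  unfolding Su_dg unfolding u_dg A1 A3 fun_dg one_dg dg_smult dg_add dg_mult dg_eq
  by (simp add: fun_eq_iff field_simps power2_eq_square)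


lemma qd: assumes "(qpar hb)^2 \<noteq> 1" shows "qpar hb - inverse (qpar hb) \<noteq> 0"
proof
  assume "qpar hb - inverse (qpar hb) = 0"
  then have "qpar hb * qpar hb = 1" by (simp add: field_simps)
  with assms show False by (simp add: power2_eq_square)
qed

lemma Cf_rel: assumes "(qpar hb)^2 \<noteq> 1"
  shows "1 + (1 - qpar hb ^ 2) * (Cf hb h / (qpar hb * K1f hb h * K2f hb h)) = inverse ((K1f hb h * K2f hb h)^2)"
  using qd[OF assms] unfolding Cf_def by (simp add: field_simps) (simp add: algebra_simps power2_eq_square)

lemma Cf_rel2: assumes "(qpar hb)^2 \<noteq> 1"
  shows "Pf hb h + Cf hb h * (Pf hb h * ((1 - qpar hb ^ 2) * (- K1f hb h * K2f hb h / qpar hb))) = Pf hb h * (K1f hb h * K2f hb h)^2"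
  using qd[OF assms] unfolding Cf_def by (simp add: field_simps) (simp add: algebra_simps power2_eq_square)

lemma r_ok: assumes q: "(qpar hb)^2 \<noteq> 1"
  shows "Uq_mult hb (Uq_u hb) (Uq_inv hb (Uq_S hb (Uq_u hb))) = Uq_fun (\<lambda>h. inverse ((K1f hb h * K2f hb h)^2))"
proof -
  have n1: "\<And>h. Pf hb h + Cf hb h * (Pf hb h * ((1 - qpar hb ^ 2) * (- K1f hb h * K2f hb h / qpar hb))) \<noteq> 0"
    unfolding Cf_rel2[OF q] by simp
  show ?thesis
    unfolding Su_dg inv_dg[OF nz(3) n1] unfolding Cf_rel2[OF q] u_dg dg_mult fun_dg dg_eq
    apply (simp add: fun_eq_iff Cf_rel[OF q, symmetric])
    apply (simp add: field_simps)
    apply (simp add: algebra_simps power2_eq_square eval_nat_numeral)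
    done
qed


theorem mainTheorem2:
  fixes hb :: complex
  assumes q_generic: "(qpar hb)^2 \<noteq> 1"
  defines "u \<equiv> Uq_u hb"
  defines "z \<equiv> Uq_mult hb u (Uq_S hb u)"
  defines "r \<equiv> Uq_mult hb u (Uq_inv hb (Uq_S hb u))"
  shows "(u = Uq_mult hb
             (Uq_fun (\<lambda>h. exp (\<i> * pi / 4 * (snd h)^2) * exp (- hb / 4 * ((fst h)^2 - (snd h)^2))))
             (Uq_add Uq_one (Uq_smult (1 - (qpar hb)^2)
                (Uq_mult hb (Uq_mult hb (Uq_mult hb (Uq_K1inv hb) (Uq_K2inv hb)) (Uq_F hb)) (Uq_E hb)))))
    \<and> (Uq_S hb u = Uq_mult hb
             (Uq_fun (\<lambda>h. exp (\<i> * pi / 4 * (snd h)^2) * exp (- hb / 4 * ((fst h)^2 - (snd h)^2))))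
             (Uq_add Uq_one (Uq_smult (1 - (qpar hb)^2)
                (Uq_mult hb (Uq_mult hb (Uq_mult hb (Uq_E hb) (Uq_F hb)) (Uq_K1 hb)) (Uq_K2 hb)))))
    \<and> (z = Uq_mult hb
             (Uq_fun (\<lambda>h. exp (\<i> * pi / 2 * (snd h)^2) * exp (- hb / 2 * ((fst h)^2 - (snd h)^2))))
             (Uq_add Uq_one (Uq_smult (1 - (qpar hb)^2)
                (Uq_add (Uq_mult hb (Uq_mult hb (Uq_mult hb (Uq_K1 hb) (Uq_K2 hb)) (Uq_E hb)) (Uq_F hb))
                        (Uq_mult hb (Uq_mult hb (Uq_mult hb (Uq_K1inv hb) (Uq_K2inv hb)) (Uq_F hb)) (Uq_E hb))))))
    \<and> (r = Uq_fun (\<lambda>h. exp (- \<i> * pi * snd h) * exp (- hb * (fst h + snd h))))"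
proof -
  show ?thesis
    unfolding u_def z_def r_def z_lam r_lam Pf_lam
    using u_dg[of hb] u_rhs[of hb] Su_dg[of hb] Su_rhs[of hb] z_ok[of hb] r_ok[OF q_generic]
    by simp
qed

end
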